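(* Assume (A1)–(A3) and let $\{\lambda^k\}$ be generated by SLPMM with any $\sigma,\alpha>0$. Fix $z\in\Phi$ and a constant $c>0$. Let $Z_0:=0$, $Z_t:=\sum_{k=0}^{t-1}\langle\lambda^k,G(z,\xi^k)\rangle$ for $t\ge1$, and $Y_t:=\|\lambda^t\|-c/\nu_g$ for $t\ge0$. Then for every $\gamma>0$ and every $t\ge1$, $$\Pr[Z_t\ge\gamma]\le e^{-\gamma^2/(2tc^2)}+\sum_{j=0}^{t-1}\Pr[Y_j>0].$$
   Context: Let $\mathcal C\subset\mathbb R^n$ be a nonempty compact convex set. Let $\xi$ be a random vector whose distribution is supported on $\Xi\subseteq\mathbb R^q$, and let $F:\mathcal C\times\Xi\to\mathbb R$ and $G_i:\mathcal C\times\Xi\to\mathbb R$ ($i=1,\dots,p$) be such that $F(\cdot,\xi)$, $G_i(\cdot,\xi)$ are convex and continuous on $\mathcal C$ for every $\xi$, and $f(x):=\mathbb E[F(x,\xi)]$, $g_i(x):=\mathbb E[G_i(x,\xi)]$ are finite on $\mathcal C$. Write $G=(G_1,\dots,G_p)^T$. The feasible set is $\Phi:=\{x\in\mathcal C: g_i(x)\le0,\ i=1,\dots,p\}$. Stochastic subgradients: $v_0(x,\xi)\in\partial_xF(x,\xi)$, $v_i(x,\xi)\in\partial_xG_i(x,\xi)$. $[t]_+=\max\{t,0\}$, $[t]_+^2=(\max\{t,0\})^2$. SLPMM: fix $\sigma,\alpha>0$, $x^0\in\mathcal C$, $\lambda^0=0\in\mathbb R^p$, i.i.d. copies $\xi^0,\xi^1,\dots$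 of $\xi$. For $k\ge0$, $x^{k+1}=\arg\min_{x\in\mathcal C}\{\mathcal L^k_\sigma(x,\lambda^k)+\frac{\alpha}{2}\|x-x^k\|^2\}$ with $\mathcal L^k_\sigma(x,\lambda):=F(x^k,\xi^k)+\langle v_0(x^k,\xi^k),x-x^k\rangle+\frac{1}{2\sigma}[\sum_{i=1}^p[\lambda_i+\sigma(G_i(x^k,\xi^k)+\langle v_i(x^k,\xi^k),x-x^k\rangle)]_+^2-\|\lambda\|^2]$, and $\lambda_i^{k+1}=[\lambda_i^k+\sigma(G_i(x^k,\xi^k)+\langle v_i(x^k,\xi^k),x^{k+1}-x^k\rangle)]_+$. Assumptions: (A1) $\|x'-x''\|\le R$ on $\mathcal C$. (A2) $\|G(x,\xi)\|\le\nu_g$ for all $x\in\mathcal C,\xi\in\Xi$. (A3) $\|v_0(x,\xi)\|\le\kappa_f$, $\|v_i(x,\xi)\|\le\kappa_g$ for all $x,\xi$. *)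

theory Defs
  imports "HOL-Probability.Probability"
begin

definition subgrad_on :: "'a::real_inner set \<Rightarrow> ('a \<Rightarrow> real) \<Rightarrow> 'a \<Rightarrow> 'a \<Rightarrow> bool" where
  "subgrad_on C f x v \<longleftrightarrow> (\<forall>y\<in>C. f x + inner v (y - x) \<le> f y)"

definition slpmm_L ::
  "('a::euclidean_space \<Rightarrow> 'b \<Rightarrow> real) \<Rightarrow> ('a \<Rightarrow> 'b \<Rightarrow> real^'p) \<Rightarrow> ('a \<Rightarrow> 'b \<Rightarrow> 'a)
   \<Rightarrow> ('p \<Rightarrow> 'a \<Rightarrow> 'b \<Rightarrow> 'a) \<Rightarrow> real \<Rightarrow> 'a \<Rightarrow> 'b \<Rightarrow> 'a \<Rightarrow> real^'p \<Rightarrow> real" where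
  "slpmm_L F G v0 v \<sigma> xk s x lam =
     F xk s + inner (v0 xk s) (x - xk)
     + (1 / (2 * \<sigma>)) * ((\<Sum>i\<in>UNIV. (max (lam $ i + \<sigma> * (G xk s $ i + inner (v i xk s) (x - xk))) 0)\<^sup>2)
                        - (norm lam)\<^sup>2)"

end

theory Submission
  imports Defs
begin


definition hh :: "real \<Rightarrow> real \<Rightarrow> ('a::euclidean_space \<times> (real^'p::finite) \<times> (real^'p) \<times> 'a \<times> ('a^'p)) \<Rightarrow> 'a \<Rightarrow> real" where
  "hh \<sigma> \<alpha> q y = (case q of (p, l, g, w0, W) \<Rightarrow>
     inner w0 (y - p) + (1 / (2 * \<sigma>)) * ((\<Sum>i\<in>UNIV. (max (l $ i + \<sigma> * (g $ i + inner (W $ i) (y - p))) 0)\<^sup>2)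
                        - (norm l)\<^sup>2) + (\<alpha> / 2) * (norm (y - p))\<^sup>2)"

lemma max_sq_mid: "(max ((a + b) / 2) 0)\<^sup>2 \<le> ((max a 0)\<^sup>2 + (max (b::real) 0)\<^sup>2) / 2"
proof -
  have "max ((a + b) / 2) 0 \<le> (max a 0 + max b 0) / 2" by (auto simp: max_def)
  hence "(max ((a + b) / 2) 0)\<^sup>2 \<le> ((max a 0 + max b 0) / 2)\<^sup>2"
    by (intro power_mono) auto
  also have "\<dots> \<le> ((max a 0)\<^sup>2 + (max (b::real) 0)\<^sup>2) / 2"
  proof -
    have "((max a 0 + max b 0) / 2)\<^sup>2 = ((max a 0)\<^sup>2 + (max (b::real) 0)\<^sup>2) / 2 - ((max a 0 - max b 0) / 2)\<^sup>2"
      by (simp add: power2_eq_square field_simps)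
    moreover have "0 \<le> ((max a 0 - max b 0) / 2)\<^sup>2" by simp
    ultimately show ?thesis by linarith
  qed
  finally show ?thesis .
qed

lemma parallelo: fixes a b :: "'a::real_inner"
  shows "(norm ((1/2) *\<^sub>R (a + b)))\<^sup>2 = ((norm a)\<^sup>2 + (norm b)\<^sup>2)/2 - (norm (a - b))\<^sup>2 / 4"
  by (simp add: power2_norm_eq_inner inner_add inner_diff inner_commute algebra_simps) (simp add: field_simps)

lemma real_comb3: "(A::real) \<le> (A1+A2)/2 \<Longrightarrow> B = (B1+B2)/2 \<Longrightarrow> Cc = (C1+C2)/2 - D \<Longrightarrow> B + A + Cc \<le> ((B1+A1+C1)+(B2+A2+C2))/2 - D"
  by (simp add: field_simps)

lemma hh_mid:
  assumes "\<sigma> > 0"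
  shows "hh \<sigma> \<alpha> q ((1/2) *\<^sub>R (y1 + y2)) \<le> (hh \<sigma> \<alpha> q y1 + hh \<sigma> \<alpha> q y2) / 2 - (\<alpha>/8) * (norm (y1 - y2))\<^sup>2"
proof -
  obtain p l g w0 W where q: "q = (p, l, g, w0, W)" by (cases q) auto
  define u where "u = (\<lambda>y i. l $ i + \<sigma> * (g $ i + inner (W $ i) (y - p)))"
  have um: "u ((1/2) *\<^sub>R (y1 + y2)) i = (u y1 i + u y2 i) / 2" for i
    by (simp add: u_def inner_diff_right inner_add_right algebra_simps)
  have s: "(\<Sum>i\<in>UNIV. (max (u ((1/2) *\<^sub>R (y1 + y2)) i) 0)\<^sup>2) \<le>
     ((\<Sum>i\<in>UNIV. (max (u y1 i) 0)\<^sup>2) + (\<Sum>i\<in>UNIV. (max (u y2 i) 0)\<^sup>2)) / 2"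
  proof -
    have "(\<Sum>i\<in>UNIV. (max (u ((1/2) *\<^sub>R (y1 + y2)) i) 0)\<^sup>2) \<le> (\<Sum>i\<in>UNIV. ((max (u y1 i) 0)\<^sup>2 + (max (u y2 i) 0)\<^sup>2) / 2)"
      unfolding um by (intro sum_mono max_sq_mid)
    also have "\<dots> = ((\<Sum>i\<in>UNIV. (max (u y1 i) 0)\<^sup>2) + (\<Sum>i\<in>UNIV. (max (u y2 i) 0)\<^sup>2)) / 2"
      by (simp add: sum.distrib sum_divide_distrib[symmetric])
    finally show ?thesis .
  qed
  have n: "(norm ((1/2) *\<^sub>R (y1 + y2) - p))\<^sup>2 = ((norm (y1 - p))\<^sup>2 + (norm (y2 - p))\<^sup>2)/2 - (norm (y1 - y2))\<^sup>2 / 4"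
  proof -
    have "(1/2) *\<^sub>R (y1 + y2) - p = (1/2) *\<^sub>R ((y1 - p) + (y2 - p))" by (simp add: algebra_simps flip: scaleR_add_left)
    moreover have "y1 - y2 = (y1 - p) - (y2 - p)" by simp
    ultimately show ?thesis using parallelo[of "y1 - p" "y2 - p"] by simp
  qed
  have li: "inner w0 ((1/2) *\<^sub>R (y1 + y2) - p) = (inner w0 (y1 - p) + inner w0 (y2 - p)) / 2"
    by (simp add: inner_diff_right inner_add_right algebra_simps)
  have s': "(1 / (2 * \<sigma>)) * ((\<Sum>i\<in>UNIV. (max (u ((1/2) *\<^sub>R (y1 + y2)) i) 0)\<^sup>2) - (norm l)\<^sup>2) \<le>
     ((1 / (2 * \<sigma>)) * ((\<Sum>i\<in>UNIV. (max (u y1 i) 0)\<^sup>2) - (norm l)\<^sup>2) + (1 / (2 * \<sigma>)) * ((\<Sum>i\<in>UNIV. (max (u y2 i) 0)\<^sup>2) - (norm l)\<^sup>2)) / 2"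
  proof -
    have "(1 / (2 * \<sigma>)) * ((\<Sum>i\<in>UNIV. (max (u ((1/2) *\<^sub>R (y1 + y2)) i) 0)\<^sup>2) - (norm l)\<^sup>2) \<le>
      (1 / (2 * \<sigma>)) * (((\<Sum>i\<in>UNIV. (max (u y1 i) 0)\<^sup>2) + (\<Sum>i\<in>UNIV. (max (u y2 i) 0)\<^sup>2)) / 2 - (norm l)\<^sup>2)"
      using s assms by (intro mult_left_mono) auto
    thus ?thesis by (simp add: algebra_simps add_divide_distrib diff_divide_distrib)
  qed
  have hq: "hh \<sigma> \<alpha> q y = inner w0 (y - p) + (1 / (2 * \<sigma>)) * ((\<Sum>i\<in>UNIV. (max (u y i) 0)\<^sup>2) - (norm l)\<^sup>2)
     + (\<alpha> / 2) * (norm (y - p))\<^sup>2" for y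
    by (simp add: hh_def q u_def)
  have n': "(\<alpha> / 2) * (norm ((1/2) *\<^sub>R (y1 + y2) - p))\<^sup>2 = ((\<alpha> / 2) * (norm (y1 - p))\<^sup>2 + (\<alpha> / 2) * (norm (y2 - p))\<^sup>2)/2 - (\<alpha>/8) * (norm (y1 - y2))\<^sup>2"
    unfolding n by (simp add: algebra_simps)
  show ?thesis
    unfolding hq
    by (rule real_comb3[OF s' li n'])
qed

lemma hh_unique:
  assumes "\<sigma> > 0" "\<alpha> > 0" "convex C"
    and m1: "is_arg_min (hh \<sigma> \<alpha> q) (\<lambda>y. y \<in> C) y1" and m2: "is_arg_min (hh \<sigma> \<alpha> q) (\<lambda>y. y \<in> C) y2"
  shows "y1 = y2"
proof -
  have c1: "y1 \<in> C" and c2: "y2 \<in> C" using m1 m2 by (auto simp: is_arg_min_def)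
  have e: "hh \<sigma> \<alpha> q y1 = hh \<sigma> \<alpha> q y2" using m1 m2 c1 c2 unfolding is_arg_min_def by force
  have "(1/2) *\<^sub>R y1 + (1/2) *\<^sub>R y2 \<in> C" using c1 c2 assms(3) by (intro convexD) auto
  hence mc: "(1/2) *\<^sub>R (y1 + y2) \<in> C" by (simp add: scaleR_add_right)
  have "hh \<sigma> \<alpha> q y1 \<le> hh \<sigma> \<alpha> q ((1/2) *\<^sub>R (y1 + y2))" using m1 mc unfolding is_arg_min_def by force
  with hh_mid[OF assms(1), of \<alpha> q y1 y2] e have "(\<alpha>/8) * (norm (y1 - y2))\<^sup>2 \<le> 0" by (simp add: field_simps)
  with assms(2) have "(norm (y1 - y2))\<^sup>2 \<le> 0" by (simp add: mult_le_0_iff)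
  thus ?thesis by simp
qed

lemma hh_alt: "hh \<sigma> \<alpha> q y = inner (fst (snd (snd (snd q)))) (y - fst q) + (1 / (2 * \<sigma>)) *
   ((\<Sum>i\<in>UNIV. (max (fst (snd q) $ i + \<sigma> * (fst (snd (snd q)) $ i + inner (snd (snd (snd (snd q))) $ i) (y - fst q))) 0)\<^sup>2)
                        - (norm (fst (snd q)))\<^sup>2) + (\<alpha> / 2) * (norm (y - fst q))\<^sup>2"
  by (cases q) (simp add: hh_def)

lemma hh_cont: "continuous_on UNIV (\<lambda>z. hh \<sigma> \<alpha> (fst z) (snd z))"
  unfolding hh_alt by (intro continuous_intros)

definition Bq where "Bq \<sigma> \<alpha> C q = (THE y. is_arg_min (hh \<sigma> \<alpha> q) (\<lambda>y. y \<in> C) y)"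

lemma Bq_argmin:
  assumes "\<sigma> > 0" "\<alpha> > 0" "convex C" "compact C" "C \<noteq> {}"
  shows "is_arg_min (hh \<sigma> \<alpha> q) (\<lambda>y. y \<in> C) (Bq \<sigma> \<alpha> C q)"
proof -
  have "continuous_on C (\<lambda>y. hh \<sigma> \<alpha> (fst (q,y)) (snd (q,y)))"
    by (rule continuous_on_compose2[OF hh_cont]) (auto intro!: continuous_intros)
  hence "continuous_on C (hh \<sigma> \<alpha> q)" by simp
  then obtain y where "y \<in> C" "\<forall>y'\<in>C. hh \<sigma> \<alpha> q y \<le> hh \<sigma> \<alpha> q y'"
    using continuous_attains_inf[OF assms(4,5)] by blast
  hence ex: "is_arg_min (hh \<sigma> \<alpha> q) (\<lambda>y. y \<in> C) y" unfolding is_arg_min_def by force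
  have "(THE y. is_arg_min (hh \<sigma> \<alpha> q) (\<lambda>y. y \<in> C) y) = y"
    by (rule the_equality[where P="\<lambda>y. is_arg_min (hh \<sigma> \<alpha> q) (\<lambda>y. y \<in> C) y", OF ex]) (rule hh_unique[OF assms(1-3) _ ex])
  thus ?thesis unfolding Bq_def using ex by simp
qed

lemma Bq_eq:
  assumes "\<sigma> > 0" "\<alpha> > 0" "convex C" "compact C" "C \<noteq> {}"
    and "is_arg_min (hh \<sigma> \<alpha> q) (\<lambda>y. y \<in> C) y"
  shows "Bq \<sigma> \<alpha> C q = y"
  using hh_unique[OF assms(1-3) Bq_argmin[OF assms(1-5)] assms(6)] .

lemma Bq_cont:
  assumes "\<sigma> > 0" "\<alpha> > 0" "convex C" "compact C" "C \<noteq> {}"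
  shows "continuous_on UNIV (Bq \<sigma> \<alpha> C)"
proof (rule continuous_from_closed_graph[OF assms(4)])
  show "Bq \<sigma> \<alpha> C \<in> UNIV \<rightarrow> C"
  proof
    fix q show "Bq \<sigma> \<alpha> C q \<in> C" using Bq_argmin[OF assms, of q] by (simp add: is_arg_min_def)
  qed
  have eq: "(\<lambda>x. (x, Bq \<sigma> \<alpha> C x)) ` UNIV = (UNIV \<times> C) \<inter> (\<Inter>y\<in>C. {z. hh \<sigma> \<alpha> (fst z) (snd z) \<le> hh \<sigma> \<alpha> (fst z) y})"
  proof (intro equalityI subsetI)
    fix z assume "z \<in> (\<lambda>x. (x, Bq \<sigma> \<alpha> C x)) ` UNIV"
    then obtain q where z: "z = (q, Bq \<sigma> \<alpha> C q)" by auto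
    show "z \<in> (UNIV \<times> C) \<inter> (\<Inter>y\<in>C. {z. hh \<sigma> \<alpha> (fst z) (snd z) \<le> hh \<sigma> \<alpha> (fst z) y})"
      using Bq_argmin[OF assms, of q] unfolding z is_arg_min_def by force
  next
    fix z assume z: "z \<in> (UNIV \<times> C) \<inter> (\<Inter>y\<in>C. {z. hh \<sigma> \<alpha> (fst z) (snd z) \<le> hh \<sigma> \<alpha> (fst z) y})"
    hence "is_arg_min (hh \<sigma> \<alpha> (fst z)) (\<lambda>y. y \<in> C) (snd z)" unfolding is_arg_min_def by force
    hence "Bq \<sigma> \<alpha> C (fst z) = snd z" by (rule Bq_eq[OF assms])
    thus "z \<in> (\<lambda>x. (x, Bq \<sigma> \<alpha> C x)) ` UNIV" by (intro image_eqI[of _ _ "fst z"]) auto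
  qed
  have cl1: "closed {z. hh \<sigma> \<alpha> (fst z) (snd z) \<le> hh \<sigma> \<alpha> (fst z) y}" for y
  proof (rule closed_Collect_le)
    show "continuous_on UNIV (\<lambda>z. hh \<sigma> \<alpha> (fst z) (snd z))" by (rule hh_cont)
    have "continuous_on UNIV (\<lambda>z. hh \<sigma> \<alpha> (fst (fst z, y)) (snd (fst z, y)))"
      by (rule continuous_on_compose2[OF hh_cont]) (auto intro!: continuous_intros)
    thus "continuous_on UNIV (\<lambda>z. hh \<sigma> \<alpha> (fst z) y)" by simp
  qed
  show "closed ((\<lambda>x. (x, Bq \<sigma> \<alpha> C x)) ` UNIV)"
    unfolding eq using cl1 assms(4) by (intro closed_Int closed_INT closed_Times) (auto intro: compact_imp_closed)
qed

lemma measurable_vec_borel: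
  fixes f :: "'x \<Rightarrow> 'c::euclidean_space ^ 'n::finite"
  assumes "\<And>i. (\<lambda>x. f x $ i) \<in> borel_measurable M"
  shows "f \<in> borel_measurable M"
  unfolding borel_measurable_euclidean_space[where f=f]
proof
  fix b :: "'c^'n" assume "b \<in> Basis"
  then obtain i u where b: "b = axis i u" and u: "u \<in> Basis" by (auto simp: Basis_vec_def)
  have "(\<lambda>x. (f x $ i) \<bullet> u) \<in> borel_measurable M" using assms[of i] by measurable
  thus "(\<lambda>x. f x \<bullet> b) \<in> borel_measurable M" by (simp add: b inner_axis)
qed

lemma vec_nth_meas [measurable (raw)]:
  fixes f :: "'x \<Rightarrow> 'c::real_normed_vector ^ 'n::finite"
  assumes "f \<in> borel_measurable M" shows "(\<lambda>x. f x $ i) \<in> borel_measurable M"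
proof -
  have "continuous_on UNIV (\<lambda>x::'c^'n. x $ i)"
    by (intro linear_continuous_on bounded_linear_vec_nth)
  from measurable_compose[OF assms borel_measurable_continuous_onI[OF this]] show ?thesis .
qed

lemma meas_pair_borel:
  fixes a :: "'x \<Rightarrow> 'c::second_countable_topology" and b :: "'x \<Rightarrow> 'd::second_countable_topology"
  assumes "a \<in> borel_measurable M" "b \<in> borel_measurable M"
  shows "(\<lambda>\<omega>. (a \<omega>, b \<omega>)) \<in> borel_measurable M"
  using measurable_Pair[OF assms] by (simp add: borel_prod)

lemma is_arg_min_plus_const: "is_arg_min (\<lambda>y. c + f y) P y \<longleftrightarrow> is_arg_min (f :: 'x \<Rightarrow> real) P y"
  by (simp add: is_arg_min_def)

definition qof :: "('a::euclidean_space \<Rightarrow> 'b \<Rightarrow> real^'p::finite) \<Rightarrow> ('a \<Rightarrow> 'b \<Rightarrow> 'a) \<Rightarrow> ('p \<Rightarrow> 'a \<Rightarrow> 'b \<Rightarrow> 'a)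
   \<Rightarrow> 'a \<Rightarrow> real^'p \<Rightarrow> 'b \<Rightarrow> ('a \<times> (real^'p) \<times> (real^'p) \<times> 'a \<times> ('a^'p))" where
  "qof G v0 v p l s = (p, l, G p s, v0 p s, \<chi> i. v i p s)"

lemma slpmm_L_hh: "slpmm_L F G v0 v \<sigma> xk s y lam + (\<alpha> / 2) * (norm (y - xk))\<^sup>2 = F xk s + hh \<sigma> \<alpha> (qof G v0 v xk lam s) y"
  by (simp add: slpmm_L_def hh_def qof_def)

locale slp =
  fixes \<sigma> \<alpha> :: real and C :: "'a::euclidean_space set"
    and G :: "'a \<Rightarrow> 'b::euclidean_space \<Rightarrow> real^'p::finite"
    and v0 :: "'a \<Rightarrow> 'b \<Rightarrow> 'a" and v :: "'p \<Rightarrow> 'a \<Rightarrow> 'b \<Rightarrow> 'a" and x0 :: 'a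
  assumes sp: "\<sigma> > 0" "\<alpha> > 0"
    and Cc: "convex C" "compact C" "C \<noteq> {}"
    and G_meas: "(\<lambda>p. G (fst p) (snd p)) \<in> borel_measurable borel"
    and v0_meas: "(\<lambda>p. v0 (fst p) (snd p)) \<in> borel_measurable borel"
    and v_meas: "\<And>i. (\<lambda>p. v i (fst p) (snd p)) \<in> borel_measurable borel"
begin

definition stepf :: "'a \<times> (real^'p) \<Rightarrow> 'b \<Rightarrow> 'a \<times> (real^'p)" where
  "stepf st s = (let p = fst st; l = snd st; y = Bq \<sigma> \<alpha> C (qof G v0 v p l s) in
     (y, \<chi> i. max (l $ i + \<sigma> * (G p s $ i + inner (v i p s) (y - p))) 0))"

primrec Psi :: "nat \<Rightarrow> (nat \<Rightarrow> 'b) \<Rightarrow> 'a \<times> (real^'p)" where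
  "Psi 0 \<eta> = (x0, 0)"
| "Psi (Suc k) \<eta> = stepf (Psi k \<eta>) (\<eta> k)"

lemma comp2_meas:
  fixes H :: "'a \<Rightarrow> 'b \<Rightarrow> 'z::euclidean_space"
  assumes "(\<lambda>p. H (fst p) (snd p)) \<in> borel_measurable borel"
    and "a \<in> borel_measurable M" "b \<in> borel_measurable M"
  shows "(\<lambda>\<omega>. H (a \<omega>) (b \<omega>)) \<in> borel_measurable M"
  using measurable_compose[OF meas_pair_borel[OF assms(2,3)] assms(1)] by simp

lemma stepf_meas:
  assumes st: "st \<in> borel_measurable M" and s: "s \<in> borel_measurable M"
  shows "(\<lambda>\<omega>. stepf (st \<omega>) (s \<omega>)) \<in> borel_measurable M"
proof -
  have st': "st \<in> measurable M (borel \<Otimes>\<^sub>M borel)" using st by (simp add: borel_prod)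
  have p: "(\<lambda>\<omega>. fst (st \<omega>)) \<in> borel_measurable M" and l: "(\<lambda>\<omega>. snd (st \<omega>)) \<in> borel_measurable M"
    using measurable_compose[OF st' measurable_fst] measurable_compose[OF st' measurable_snd] by auto
  have g: "(\<lambda>\<omega>. G (fst (st \<omega>)) (s \<omega>)) \<in> borel_measurable M" by (rule comp2_meas[OF G_meas p s])
  have w0: "(\<lambda>\<omega>. v0 (fst (st \<omega>)) (s \<omega>)) \<in> borel_measurable M" by (rule comp2_meas[OF v0_meas p s])
  have wi: "(\<lambda>\<omega>. v i (fst (st \<omega>)) (s \<omega>)) \<in> borel_measurable M" for i by (rule comp2_meas[OF v_meas p s])
  have W: "(\<lambda>\<omega>. \<chi> i. v i (fst (st \<omega>)) (s \<omega>)) \<in> borel_measurable M"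
    by (rule measurable_vec_borel) (simp add: wi)
  have q: "(\<lambda>\<omega>. qof G v0 v (fst (st \<omega>)) (snd (st \<omega>)) (s \<omega>)) \<in> borel_measurable M"
    unfolding qof_def by (intro meas_pair_borel p l g w0 W)
  have y: "(\<lambda>\<omega>. Bq \<sigma> \<alpha> C (qof G v0 v (fst (st \<omega>)) (snd (st \<omega>)) (s \<omega>))) \<in> borel_measurable M"
    using measurable_compose[OF q borel_measurable_continuous_onI[OF Bq_cont[OF sp Cc]]] by simp
  have gi: "(\<lambda>\<omega>. G (fst (st \<omega>)) (s \<omega>) $ i) \<in> borel_measurable M" for i using g by measurable
  have li: "(\<lambda>\<omega>. snd (st \<omega>) $ i) \<in> borel_measurable M" for i using l by measurable
  have nl: "(\<lambda>\<omega>. \<chi> i. max (snd (st \<omega>) $ i + \<sigma> * (G (fst (st \<omega>)) (s \<omega>) $ i + inner (v i (fst (st \<omega>)) (s \<omega>))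
       (Bq \<sigma> \<alpha> C (qof G v0 v (fst (st \<omega>)) (snd (st \<omega>)) (s \<omega>)) - fst (st \<omega>)))) 0) \<in> borel_measurable M"
    by (rule measurable_vec_borel) (simp, use gi li wi y p in measurable)
  show ?thesis unfolding stepf_def Let_def by (intro meas_pair_borel y nl)
qed

lemma Psi_meas: "{..<k} \<subseteq> I \<Longrightarrow> Psi k \<in> borel_measurable (PiM I (\<lambda>_. borel))"
proof (induction k)
  case 0 thus ?case by simp
next
  case (Suc k)
  have "{..<k} \<subseteq> I" using Suc.prems by auto
  hence "Psi k \<in> borel_measurable (PiM I (\<lambda>_. borel))" by (rule Suc.IH)
  moreover have "(\<lambda>\<eta>. \<eta> k) \<in> borel_measurable (PiM I (\<lambda>_. borel))"
    using Suc.prems by (intro measurable_component_singleton) auto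
  ultimately show ?case using stepf_meas by simp
qed

lemma Psi_local: "(\<And>i. i < k \<Longrightarrow> \<eta> i = \<eta>' i) \<Longrightarrow> Psi k \<eta> = Psi k \<eta>'"
  by (induction k) auto

lemma Psi_nonneg: "0 \<le> snd (Psi k \<eta>) $ i"
  by (cases k) (auto simp: stepf_def Let_def)

end



locale slp2 = slp \<sigma> \<alpha> C G v0 v x0
  for \<sigma> \<alpha> :: real and C :: "'a::euclidean_space set"
    and G :: "'a \<Rightarrow> 'b::euclidean_space \<Rightarrow> real^'p::finite"
    and v0 :: "'a \<Rightarrow> 'b \<Rightarrow> 'a" and v :: "'p \<Rightarrow> 'a \<Rightarrow> 'b \<Rightarrow> 'a" and x0 :: 'a +
  fixes \<mu> :: "'b measure" and z :: 'a and c nu_g :: real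
  assumes mu: "prob_space \<mu>" and sets_mu: "sets \<mu> = sets borel"
    and Gz_bound: "AE s in \<mu>. norm (G z s) \<le> nu_g"
    and Gz_int: "\<And>i. integrable \<mu> (\<lambda>s. G z s $ i)"
    and Gz_neg: "\<And>i. integral\<^sup>L \<mu> (\<lambda>s. G z s $ i) \<le> 0"
    and cpos: "c > 0"
begin

definition good :: "real^'p \<Rightarrow> bool" where "good l \<longleftrightarrow> \<not> (norm l - c / nu_g > 0)"

definition Wt :: "real^'p \<Rightarrow> 'b \<Rightarrow> real" where
  "Wt l s = (if good l then inner l (G z s) else 0)"

lemma Gz_meas_borel: "(\<lambda>s. G z s) \<in> borel_measurable borel"
  using comp2_meas[OF G_meas, of "\<lambda>s. z" borel "\<lambda>s. s"] by simp

lemma Gz_meas: "(\<lambda>s. G z s) \<in> borel_measurable \<mu>"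
  using Gz_meas_borel measurable_cong_sets[OF sets_mu refl] by blast

lemma Wt_meas_gen:
  assumes "l \<in> borel_measurable M" "s \<in> borel_measurable M" "(\<lambda>\<omega>. G z (s \<omega>)) \<in> borel_measurable M"
  shows "(\<lambda>\<omega>. Wt (l \<omega>) (s \<omega>)) \<in> borel_measurable M"
  unfolding Wt_def good_def using assms by measurable

lemma Wt_bound: assumes "norm (G z s) \<le> nu_g" shows "\<bar>Wt l s\<bar> \<le> c"
proof (cases "good l")
  case False thus ?thesis using cpos by (simp add: Wt_def)
next
  case True
  hence nl: "norm l \<le> c / nu_g" by (simp add: good_def)
  show ?thesis
  proof (cases "nu_g > 0")
    case True
    have "\<bar>inner l (G z s)\<bar> \<le> norm l * norm (G z s)" by (rule Cauchy_Schwarz_ineq2)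
    also have "\<dots> \<le> (c / nu_g) * nu_g" using nl assms True cpos by (intro mult_mono) auto
    also have "\<dots> = c" using True by simp
    finally show ?thesis using \<open>good l\<close> by (simp add: Wt_def)
  next
    case False
    hence "c / nu_g \<le> 0" using cpos by (simp add: divide_nonneg_nonpos)
    hence "norm l \<le> 0" using nl by linarith
    hence "l = 0" by simp
    thus ?thesis using cpos by (simp add: Wt_def)
  qed
qed

lemma Wt_expect:
  assumes "\<And>i. 0 \<le> l $ i"
  shows "integral\<^sup>L \<mu> (Wt l) \<le> 0"
proof (cases "good l")
  case False hence "Wt l = (\<lambda>_. 0)" by (auto simp: Wt_def)
  thus ?thesis by simp
next
  case True
  have "integral\<^sup>L \<mu> (Wt l) = integral\<^sup>L \<mu> (\<lambda>s. \<Sum>i\<in>UNIV. l $ i * G z s $ i)"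
    using True by (intro Bochner_Integration.integral_cong) (auto simp: Wt_def inner_vec_def)
  also have "\<dots> = (\<Sum>i\<in>UNIV. l $ i * integral\<^sup>L \<mu> (\<lambda>s. G z s $ i))"
    by (simp add: Gz_int)
  also have "\<dots> \<le> 0"
    using assms Gz_neg by (intro sum_nonpos mult_nonneg_nonpos) auto
  finally show ?thesis .
qed

lemma step_hoeff:
  assumes l: "\<And>i. 0 \<le> l $ i" and h: "h > 0"
  shows "(\<integral>\<^sup>+ s. ennreal (exp (h * Wt l s)) \<partial>\<mu>) \<le> ennreal (exp (h\<^sup>2 * c\<^sup>2 / 2))"
proof -
  interpret mu: prob_space \<mu> by (rule mu)
  have meas: "Wt l \<in> borel_measurable \<mu>"
    using Wt_meas_gen[of "\<lambda>_. l" \<mu> "\<lambda>s. s"] Gz_meas measurable_ident_sets[OF sets_mu] by simp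
  have ae: "AE s in \<mu>. Wt l s \<in> {-c..c}"
    using Gz_bound by eventually_elim (metis Wt_bound abs_le_iff atLeastAtMost_iff minus_le_iff)
  interpret ib: interval_bounded_random_variable \<mu> "Wt l" "-c" c
    by unfold_locales (use meas ae in auto)
  define E where "E = integral\<^sup>L \<mu> (Wt l)"
  have E: "E \<le> 0" unfolding E_def by (rule Wt_expect[OF l])
  have "(\<integral>\<^sup>+ s. ennreal (exp (h * Wt l s)) \<partial>\<mu>) \<le> (\<integral>\<^sup>+ s. ennreal (exp (h * (Wt l s - E))) \<partial>\<mu>)"
  proof (intro nn_integral_mono ennreal_leI)
    fix s have "h * Wt l s \<le> h * (Wt l s - E)" using h E by (simp add: algebra_simps mult_nonpos_nonneg)
    thus "exp (h * Wt l s) \<le> exp (h * (Wt l s - E))" by simp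
  qed
  also have "\<dots> \<le> ennreal (exp (h\<^sup>2 * (c - - c)\<^sup>2 / 8))"
    unfolding E_def by (rule ib.Hoeffdings_lemma_nn_integral[OF h])
  also have "h\<^sup>2 * (c - - c)\<^sup>2 / 8 = h\<^sup>2 * c\<^sup>2 / 2" by (simp add: power2_eq_square field_simps)
  finally show ?thesis .
qed

definition Sk :: "nat \<Rightarrow> (nat \<Rightarrow> 'b) \<Rightarrow> real" where
  "Sk k \<eta> = (\<Sum>i<k. Wt (snd (Psi i \<eta>)) (\<eta> i))"

lemma sets_P: "sets (PiM I (\<lambda>_. \<mu>)) = sets (PiM I (\<lambda>_. borel))"
  by (rule sets_PiM_cong) (auto simp: sets_mu)

lemma Psi_meas_mu: "{..<k} \<subseteq> I \<Longrightarrow> Psi k \<in> borel_measurable (PiM I (\<lambda>_. \<mu>))"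
  using Psi_meas measurable_cong_sets[OF sets_P refl] by blast

lemma Wt_i_meas:
  assumes "i \<in> I" "{..<i} \<subseteq> I"
  shows "(\<lambda>\<eta>. Wt (snd (Psi i \<eta>)) (\<eta> i)) \<in> borel_measurable (PiM I (\<lambda>_. \<mu>))"
proof (rule Wt_meas_gen)
  show "(\<lambda>\<eta>. snd (Psi i \<eta>)) \<in> borel_measurable (PiM I (\<lambda>_. \<mu>))"
  proof -
    have "Psi i \<in> measurable (PiM I (\<lambda>_. \<mu>)) (borel \<Otimes>\<^sub>M borel)"
      using Psi_meas_mu[OF assms(2)] by (simp add: borel_prod)
    from measurable_compose[OF this measurable_snd] show ?thesis by simp
  qed
  have ci: "(\<lambda>\<eta>. \<eta> i) \<in> measurable (PiM I (\<lambda>_. \<mu>)) \<mu>"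
    using assms(1) by (rule measurable_component_singleton)
  thus "(\<lambda>\<eta>. \<eta> i) \<in> borel_measurable (PiM I (\<lambda>_. \<mu>))"
    using measurable_cong_sets[OF refl sets_mu] by blast
  show "(\<lambda>\<eta>. G z (\<eta> i)) \<in> borel_measurable (PiM I (\<lambda>_. \<mu>))"
    using measurable_compose[OF ci Gz_meas] .
qed

lemma Sk_meas: "{..<k} \<subseteq> I \<Longrightarrow> Sk k \<in> borel_measurable (PiM I (\<lambda>_. \<mu>))"
  unfolding Sk_def
  by (intro borel_measurable_sum Wt_i_meas) auto

lemma Sk_upd: "Sk k (x(k := y)) = Sk k x"
  unfolding Sk_def
  by (intro sum.cong refl) (auto intro!: arg_cong[where f="\<lambda>q. Wt (snd q) _"] Psi_local)

lemma Sk_Suc_upd: "Sk (Suc k) (x(k := y)) = Sk k x + Wt (snd (Psi k x)) y"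
proof -
  have "Psi k (x(k := y)) = Psi k x" by (intro Psi_local) auto
  thus ?thesis using Sk_upd[of k x y] by (simp add: Sk_def)
qed

lemma Sk_local: "(\<And>i. i < k \<Longrightarrow> \<eta> i = \<eta>' i) \<Longrightarrow> Sk k \<eta> = Sk k \<eta>'"
  unfolding Sk_def
proof (intro sum.cong refl)
  fix i assume a: "\<And>i. i < k \<Longrightarrow> \<eta> i = \<eta>' i" and i: "i \<in> {..<k}"
  have "Psi i \<eta> = Psi i \<eta>'" using a i by (intro Psi_local) auto
  thus "Wt (snd (Psi i \<eta>)) (\<eta> i) = Wt (snd (Psi i \<eta>')) (\<eta>' i)" using a i by simp
qed

lemma Sk0: "Sk 0 \<eta> = 0" by (simp add: Sk_def)

lemma mgf:
  assumes h: "h > 0"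
  shows "(\<integral>\<^sup>+ \<eta>. ennreal (exp (h * Sk k \<eta>)) \<partial>PiM {..<k} (\<lambda>_. \<mu>)) \<le> ennreal (exp (real k * (h\<^sup>2 * c\<^sup>2 / 2)))"
proof (induction k)
  case 0
  interpret P0: prob_space "PiM {..<0::nat} (\<lambda>_. \<mu>)" by (intro prob_space_PiM mu)
  have "(\<integral>\<^sup>+ \<eta>. ennreal (exp (h * Sk 0 \<eta>)) \<partial>PiM {..<0} (\<lambda>_. \<mu>)) = (\<integral>\<^sup>+ \<eta>. 1 \<partial>PiM {..<0::nat} (\<lambda>_. \<mu>))"
    using Sk0 by (simp del: lessThan_0)
  also have "\<dots> = 1" using P0.emeasure_space_1 by (simp del: lessThan_0)
  finally show ?case by (simp del: lessThan_0)
next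
  case (Suc k)
  interpret ps: product_sigma_finite "\<lambda>_::nat. \<mu>"
    unfolding product_sigma_finite_def using prob_space_imp_sigma_finite[OF mu] by simp
  define E where "E = exp (h\<^sup>2 * c\<^sup>2 / 2)"
  have fmeas: "(\<lambda>\<eta>. ennreal (exp (h * Sk (Suc k) \<eta>))) \<in> borel_measurable (PiM (insert k {..<k}) (\<lambda>_. \<mu>))"
  proof -
    have sm: "Sk (Suc k) \<in> borel_measurable (PiM (insert k {..<k}) (\<lambda>_. \<mu>))" by (rule Sk_meas) auto
    show ?thesis using sm by measurable
  qed
  have "(\<integral>\<^sup>+ \<eta>. ennreal (exp (h * Sk (Suc k) \<eta>)) \<partial>PiM {..<Suc k} (\<lambda>_. \<mu>))
      = (\<integral>\<^sup>+ x. (\<integral>\<^sup>+ y. ennreal (exp (h * Sk (Suc k) (x(k := y)))) \<partial>\<mu>) \<partial>PiM {..<k} (\<lambda>_. \<mu>))"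
    unfolding lessThan_Suc by (rule ps.product_nn_integral_insert[OF _ _ fmeas]) auto
  also have "\<dots> \<le> (\<integral>\<^sup>+ x. ennreal (exp (h * Sk k x)) * ennreal E \<partial>PiM {..<k} (\<lambda>_. \<mu>))"
  proof (intro nn_integral_mono)
    fix x
    have "(\<integral>\<^sup>+ y. ennreal (exp (h * Sk (Suc k) (x(k := y)))) \<partial>\<mu>)
        = (\<integral>\<^sup>+ y. ennreal (exp (h * Sk k x)) * ennreal (exp (h * Wt (snd (Psi k x)) y)) \<partial>\<mu>)"
      by (simp add: Sk_Suc_upd distrib_left exp_add ennreal_mult)
    also have "\<dots> = ennreal (exp (h * Sk k x)) * (\<integral>\<^sup>+ y. ennreal (exp (h * Wt (snd (Psi k x)) y)) \<partial>\<mu>)"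
    proof (rule nn_integral_cmult)
      have "Wt (snd (Psi k x)) \<in> borel_measurable \<mu>"
        using Wt_meas_gen[of "\<lambda>_. snd (Psi k x)" \<mu> "\<lambda>s. s"] Gz_meas measurable_ident_sets[OF sets_mu] by simp
      thus "(\<lambda>y. ennreal (exp (h * Wt (snd (Psi k x)) y))) \<in> borel_measurable \<mu>" by measurable
    qed
    also have "\<dots> \<le> ennreal (exp (h * Sk k x)) * ennreal E"
      unfolding E_def by (intro mult_left_mono step_hoeff h Psi_nonneg) auto
    finally show "(\<integral>\<^sup>+ y. ennreal (exp (h * Sk (Suc k) (x(k := y)))) \<partial>\<mu>) \<le> ennreal (exp (h * Sk k x)) * ennreal E" .
  qed
  also have "\<dots> = (\<integral>\<^sup>+ x. ennreal (exp (h * Sk k x)) \<partial>PiM {..<k} (\<lambda>_. \<mu>)) * ennreal E"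
    by (rule nn_integral_multc) (use Sk_meas[of k "{..<k}"] in measurable)
  also have "\<dots> \<le> ennreal (exp (real k * (h\<^sup>2 * c\<^sup>2 / 2))) * ennreal E"
    by (intro mult_right_mono Suc.IH) auto
  also have "\<dots> = ennreal (exp (real (Suc k) * (h\<^sup>2 * c\<^sup>2 / 2)))"
    unfolding E_def by (simp add: ennreal_mult[symmetric] exp_add[symmetric] algebra_simps)
  finally show ?case .
qed

lemma tail_P:
  assumes t: "t \<ge> 1" and g: "\<gamma> > 0"
  shows "measure (PiM {..<t} (\<lambda>_. \<mu>)) {\<eta> \<in> space (PiM {..<t} (\<lambda>_. \<mu>)). \<gamma> \<le> Sk t \<eta>}
          \<le> exp (- (\<gamma>\<^sup>2) / (2 * real t * c\<^sup>2))"
proof -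
  let ?P = "PiM {..<t} (\<lambda>_. \<mu>)"
  interpret P: prob_space ?P by (intro prob_space_PiM mu)
  define h where "h = \<gamma> / (real t * c\<^sup>2)"
  have tpos: "real t > 0" using t by simp
  have h: "h > 0" unfolding h_def using tpos g cpos by simp
  define A where "A = {\<eta> \<in> space ?P. \<gamma> \<le> Sk t \<eta>}"
  have sm: "Sk t \<in> borel_measurable ?P" by (rule Sk_meas) auto
  have "emeasure ?P A = (\<integral>\<^sup>+ \<eta>. indicator A \<eta> \<partial>?P)"
    by (rule nn_integral_indicator[symmetric]) (unfold A_def, use sm in measurable)
  also have "\<dots> \<le> (\<integral>\<^sup>+ \<eta>. ennreal (exp (h * Sk t \<eta>)) * ennreal (exp (- h * \<gamma>)) \<partial>?P)"
  proof (intro nn_integral_mono)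
    fix \<eta> show "indicator A \<eta> \<le> ennreal (exp (h * Sk t \<eta>)) * ennreal (exp (- h * \<gamma>))"
    proof (cases "\<eta> \<in> A")
      case True
      hence "h * \<gamma> \<le> h * Sk t \<eta>" using h by (simp add: A_def)
      hence "0 \<le> h * Sk t \<eta> + - h * \<gamma>" by simp
      hence "1 \<le> exp (h * Sk t \<eta> + - h * \<gamma>)" by (simp only: one_le_exp_iff)
      hence "1 \<le> exp (h * Sk t \<eta>) * exp (- h * \<gamma>)" by (simp only: exp_add)
      hence "ennreal 1 \<le> ennreal (exp (h * Sk t \<eta>) * exp (- h * \<gamma>))" by (rule ennreal_leI)
      thus ?thesis using True by (simp add: ennreal_mult)
    qed simp
  qed
  also have "\<dots> = (\<integral>\<^sup>+ \<eta>. ennreal (exp (h * Sk t \<eta>)) \<partial>?P) * ennreal (exp (- h * \<gamma>))"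
    by (rule nn_integral_multc) (use sm in measurable)
  also have "\<dots> \<le> ennreal (exp (real t * (h\<^sup>2 * c\<^sup>2 / 2))) * ennreal (exp (- h * \<gamma>))"
    by (intro mult_right_mono mgf h) auto
  also have "\<dots> = ennreal (exp (real t * (h\<^sup>2 * c\<^sup>2 / 2) + - h * \<gamma>))"
    by (simp add: ennreal_mult[symmetric] exp_add[symmetric])
  also have "real t * (h\<^sup>2 * c\<^sup>2 / 2) + - h * \<gamma> = - (\<gamma>\<^sup>2) / (2 * real t * c\<^sup>2)"
    unfolding h_def using tpos cpos by (simp add: power2_eq_square field_simps)
  finally have "emeasure ?P A \<le> ennreal (exp (- (\<gamma>\<^sup>2) / (2 * real t * c\<^sup>2)))" .
  thus ?thesis unfolding A_def P.emeasure_eq_measure by (simp add: ennreal_le_iff)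
qed

end



theorem lemma10:
  fixes M :: "'w measure"
    and C :: "'a::euclidean_space set"
    and Xi :: "'b::euclidean_space set"
    and \<xi> :: "nat \<Rightarrow> 'w \<Rightarrow> 'b"
    and F :: "'a \<Rightarrow> 'b \<Rightarrow> real"
    and G :: "'a \<Rightarrow> 'b \<Rightarrow> real^'p"
    and v0 :: "'a \<Rightarrow> 'b \<Rightarrow> 'a"
    and v :: "'p \<Rightarrow> 'a \<Rightarrow> 'b \<Rightarrow> 'a"
    and x :: "nat \<Rightarrow> 'w \<Rightarrow> 'a"
    and lam :: "nat \<Rightarrow> 'w \<Rightarrow> real^'p"
    and \<sigma> \<alpha> R nu_g kappa_f kappa_g c :: real
    and x0 z :: 'a
  assumes M: "prob_space M"
    \<comment> \<open>C nonempty compact convex\<close>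
    and C: "C \<noteq> {}" "compact C" "convex C"
    \<comment> \<open>xi^0, xi^1, ... i.i.d. random vectors, supported on Xi\<close>
    and xi_meas: "\<And>k. \<xi> k \<in> borel_measurable M"
    and xi_indep: "prob_space.indep_vars M (\<lambda>_. borel) \<xi> UNIV"
    and xi_ident: "\<And>k. distr M borel (\<xi> k) = distr M borel (\<xi> 0)"
    and xi_supp: "\<And>k. AE \<omega> in M. \<xi> k \<omega> \<in> Xi"
    \<comment> \<open>measurability of the data (tacit in the paper)\<close>
    and F_meas: "(\<lambda>p. F (fst p) (snd p)) \<in> borel_measurable borel"
    and G_meas: "(\<lambda>p. G (fst p) (snd p)) \<in> borel_measurable borel"
    and v0_meas: "(\<lambda>p. v0 (fst p) (snd p)) \<in> borel_measurable borel"
    and v_meas: "\<And>i. (\<lambda>p. v i (fst p) (snd p)) \<in> borel_measurable borel"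
    \<comment> \<open>convexity and continuity in x\<close>
    and F_cvx: "\<And>s. s \<in> Xi \<Longrightarrow> convex_on C (\<lambda>y. F y s) \<and> continuous_on C (\<lambda>y. F y s)"
    and G_cvx: "\<And>s i. s \<in> Xi \<Longrightarrow> convex_on C (\<lambda>y. G y s $ i) \<and> continuous_on C (\<lambda>y. G y s $ i)"
    \<comment> \<open>f and g_i finite on C\<close>
    and f_fin: "\<And>y. y \<in> C \<Longrightarrow> integrable M (\<lambda>\<omega>. F y (\<xi> 0 \<omega>))"
    and g_fin: "\<And>y i. y \<in> C \<Longrightarrow> integrable M (\<lambda>\<omega>. G y (\<xi> 0 \<omega>) $ i)"
    \<comment> \<open>stochastic subgradients\<close>
    and v0_sub: "\<And>y s. y \<in> C \<Longrightarrow> s \<in> Xi \<Longrightarrow> subgrad_on C (\<lambda>u. F u s) y (v0 y s)"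
    and v_sub: "\<And>i y s. y \<in> C \<Longrightarrow> s \<in> Xi \<Longrightarrow> subgrad_on C (\<lambda>u. G u s $ i) y (v i y s)"
    \<comment> \<open>(A1)--(A3)\<close>
    and A1: "\<And>y y'. y \<in> C \<Longrightarrow> y' \<in> C \<Longrightarrow> norm (y - y') \<le> R"
    and A2: "\<And>y s. y \<in> C \<Longrightarrow> s \<in> Xi \<Longrightarrow> norm (G y s) \<le> nu_g"
    and A3: "\<And>y s. y \<in> C \<Longrightarrow> s \<in> Xi \<Longrightarrow> norm (v0 y s) \<le> kappa_f"
            "\<And>i y s. y \<in> C \<Longrightarrow> s \<in> Xi \<Longrightarrow> norm (v i y s) \<le> kappa_g"
    \<comment> \<open>SLPMM with parameters sigma, alpha > 0\<close>
    and params: "\<sigma> > 0" "\<alpha> > 0"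
    and x0: "x0 \<in> C"
    and init: "\<And>\<omega>. \<omega> \<in> space M \<Longrightarrow> x 0 \<omega> = x0 \<and> lam 0 \<omega> = 0"
    and x_step: "\<And>k \<omega>. \<omega> \<in> space M \<Longrightarrow>
       is_arg_min (\<lambda>y. slpmm_L F G v0 v \<sigma> (x k \<omega>) (\<xi> k \<omega>) y (lam k \<omega>)
                        + (\<alpha> / 2) * (norm (y - x k \<omega>))\<^sup>2)
                  (\<lambda>y. y \<in> C) (x (Suc k) \<omega>)"
    and lam_step: "\<And>k \<omega>. \<omega> \<in> space M \<Longrightarrow>
       lam (Suc k) \<omega> = (\<chi> i. max (lam k \<omega> $ i + \<sigma> * (G (x k \<omega>) (\<xi> k \<omega>) $ i
                                + inner (v i (x k \<omega>) (\<xi> k \<omega>)) (x (Suc k) \<omega> - x k \<omega>))) 0)"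
    \<comment> \<open>z is feasible: z in Phi\<close>
    and z: "z \<in> C" "\<And>i. integral\<^sup>L M (\<lambda>\<omega>. G z (\<xi> 0 \<omega>) $ i) \<le> 0"
    and c: "c > 0"
  shows "\<forall>\<gamma>>0. \<forall>t\<ge>1.
           measure M {\<omega> \<in> space M. (\<Sum>k<t. inner (lam k \<omega>) (G z (\<xi> k \<omega>))) \<ge> \<gamma>}
           \<le> exp (- (\<gamma>\<^sup>2) / (2 * real t * c\<^sup>2))
             + (\<Sum>j<t. measure M {\<omega> \<in> space M. norm (lam j \<omega>) - c / nu_g > 0})"
proof (intro allI impI)
  fix \<gamma> :: real and t :: nat
  assume g: "\<gamma> > 0" and t: "t \<ge> 1"
  interpret M: prob_space M by (rule M)
  interpret S: slp \<sigma> \<alpha> C G v0 v x0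
    by unfold_locales (use params C G_meas v0_meas v_meas in auto)
  define \<mu> where "\<mu> = distr M borel (\<xi> 0)"
  have Gzb: "(\<lambda>s. G z s) \<in> borel_measurable borel"
    using S.comp2_meas[OF G_meas, of "\<lambda>s. z" borel "\<lambda>s. s"] by simp
  have Gzbi: "(\<lambda>s. G z s $ i) \<in> borel_measurable borel" for i using Gzb by measurable
  have i1: "prob_space \<mu>" unfolding \<mu>_def by (rule M.prob_space_distr[OF xi_meas])
  have i2: "sets \<mu> = sets borel" unfolding \<mu>_def by simp
  have "AE \<omega> in M. norm (G z (\<xi> 0 \<omega>)) \<le> nu_g"
    using xi_supp[of 0] by eventually_elim (use A2 z(1) in auto)
  hence i3: "AE s in \<mu>. norm (G z s) \<le> nu_g"
    unfolding \<mu>_def by (subst AE_distr_iff[OF xi_meas]) (use Gzb in measurable)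
  have i4: "integrable \<mu> (\<lambda>s. G z s $ i)" for i
    unfolding \<mu>_def by (subst integrable_distr_eq[OF xi_meas Gzbi]) (rule g_fin[OF z(1)])
  have i5: "integral\<^sup>L \<mu> (\<lambda>s. G z s $ i) \<le> 0" for i
    unfolding \<mu>_def by (subst integral_distr[OF xi_meas Gzbi]) (rule z(2))
  interpret S2: slp2 \<sigma> \<alpha> C G v0 v x0 \<mu> z c nu_g
    unfolding slp2_def slp2_axioms_def using S.slp_axioms i1 i2 i3 i4 i5 c by blast
  have link: "(x k \<omega>, lam k \<omega>) = S.Psi k (\<lambda>i. \<xi> i \<omega>)" if \<omega>: "\<omega> \<in> space M" for k \<omega>
  proof (induction k)
    case 0 thus ?case using init[OF \<omega>] by simp
  next
    case (Suc k)
    let ?p = "x k \<omega>" and ?l = "lam k \<omega>" and ?s = "\<xi> k \<omega>"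
    have eqf: "(\<lambda>y. slpmm_L F G v0 v \<sigma> ?p ?s y ?l + (\<alpha> / 2) * (norm (y - ?p))\<^sup>2)
        = (\<lambda>y. F ?p ?s + hh \<sigma> \<alpha> (qof G v0 v ?p ?l ?s) y)"
      by (rule ext) (rule slpmm_L_hh)
    have "is_arg_min (hh \<sigma> \<alpha> (qof G v0 v ?p ?l ?s)) (\<lambda>y. y \<in> C) (x (Suc k) \<omega>)"
      using x_step[OF \<omega>, of k] unfolding eqf is_arg_min_plus_const .
    hence xs: "Bq \<sigma> \<alpha> C (qof G v0 v ?p ?l ?s) = x (Suc k) \<omega>"
      by (rule Bq_eq[OF params C(3) C(2) C(1)])
    have ps: "S.Psi k (\<lambda>i. \<xi> i \<omega>) = (?p, ?l)" using Suc by simp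
    show ?case using lam_step[OF \<omega>, of k] xs
      by (simp add: ps S.stepf_def Let_def)
  qed
  have lamPsi: "lam k \<omega> = snd (S.Psi k (\<lambda>i. \<xi> i \<omega>))" if "\<omega> \<in> space M" for k \<omega>
    using link[OF that, of k] by (metis snd_conv)
  have XiU: "(\<lambda>\<omega>. \<lambda>i\<in>UNIV. \<xi> i \<omega>) \<in> measurable M (PiM UNIV (\<lambda>_. borel))"
    by (rule measurable_restrict) (rule xi_meas)
  have lam_meas: "lam j \<in> borel_measurable M" for j
  proof -
    have "S.Psi j \<in> measurable (PiM UNIV (\<lambda>_. borel)) (borel \<Otimes>\<^sub>M borel)"
      using S.Psi_meas[of j UNIV] by (simp add: borel_prod)
    from measurable_compose[OF XiU measurable_compose[OF this measurable_snd]]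
    have "(\<lambda>\<omega>. snd (S.Psi j (\<lambda>i. \<xi> i \<omega>))) \<in> borel_measurable M" by (simp add: restrict_UNIV)
    thus ?thesis by (rule measurable_cong[THEN iffD1, rotated]) (simp add: lamPsi)
  qed
  define Y where "Y j = {\<omega> \<in> space M. norm (lam j \<omega>) - c / nu_g > 0}" for j
  have Ysets: "Y j \<in> sets M" for j unfolding Y_def using lam_meas[of j] by measurable
  let ?P = "PiM {..<t} (\<lambda>_. \<mu>)"
  let ?N = "PiM {..<t} (\<lambda>_. borel :: 'b measure)"
  define Xi_t where "Xi_t = (\<lambda>\<omega>. \<lambda>i\<in>{..<t}. \<xi> i \<omega>)"
  have Xm: "Xi_t \<in> measurable M ?N" unfolding Xi_t_def by (rule measurable_restrict) (rule xi_meas)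
  have ne: "{..<t} \<noteq> {}" using t by (simp add: lessThan_empty_iff)
  have indt: "M.indep_vars (\<lambda>_. borel) \<xi> {..<t}" by (rule M.indep_vars_subset[OF xi_indep subset_UNIV])
  have "distr M ?N Xi_t = (\<Pi>\<^sub>M i\<in>{..<t}. distr M borel (\<xi> i))"
    unfolding Xi_t_def by (rule M.indep_vars_iff_distr_eq_PiM[THEN iffD1, OF ne xi_meas indt])
  also have "\<dots> = ?P" unfolding \<mu>_def by (intro PiM_cong refl) (rule xi_ident)
  finally have dP: "distr M ?N Xi_t = ?P" .
  define B where "B = {\<eta> \<in> space ?P. \<gamma> \<le> S2.Sk t \<eta>}"
  have sm: "S2.Sk t \<in> borel_measurable ?P" by (rule S2.Sk_meas) auto
  have BP: "B \<in> sets ?P" unfolding B_def using sm by measurable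
  have BN: "B \<in> sets ?N" using BP S2.sets_P[of "{..<t}"] by simp
  define B' where "B' = Xi_t -` B \<inter> space M"
  have "measure M B' = measure ?P B" unfolding B'_def dP[symmetric] by (rule measure_distr[OF Xm BN, symmetric])
  also have "\<dots> \<le> exp (- (\<gamma>\<^sup>2) / (2 * real t * c\<^sup>2))" unfolding B_def by (rule S2.tail_P[OF t g])
  finally have mB': "measure M B' \<le> exp (- (\<gamma>\<^sup>2) / (2 * real t * c\<^sup>2))" .
  have B'sets: "B' \<in> sets M" unfolding B'_def by (rule measurable_sets[OF Xm BN])
  have spP: "space ?P = space ?N" using S2.sets_P by (rule sets_eq_imp_space_eq)
  have incl: "{\<omega> \<in> space M. (\<Sum>k<t. inner (lam k \<omega>) (G z (\<xi> k \<omega>))) \<ge> \<gamma>} \<subseteq> B' \<union> (\<Union>j\<in>{..<t}. Y j)"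
  proof
    fix \<omega> assume a: "\<omega> \<in> {\<omega> \<in> space M. (\<Sum>k<t. inner (lam k \<omega>) (G z (\<xi> k \<omega>))) \<ge> \<gamma>}"
    hence \<omega>: "\<omega> \<in> space M" and Z: "(\<Sum>k<t. inner (lam k \<omega>) (G z (\<xi> k \<omega>))) \<ge> \<gamma>" by auto
    show "\<omega> \<in> B' \<union> (\<Union>j\<in>{..<t}. Y j)"
    proof (cases "\<exists>j<t. \<omega> \<in> Y j")
      case True thus ?thesis by auto
    next
      case False
      have "S2.Sk t (Xi_t \<omega>) = S2.Sk t (\<lambda>i. \<xi> i \<omega>)"
        by (rule S2.Sk_local) (simp add: Xi_t_def)
      also have "\<dots> = (\<Sum>k<t. inner (lam k \<omega>) (G z (\<xi> k \<omega>)))"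
        unfolding S2.Sk_def
      proof (intro sum.cong refl)
        fix k assume k: "k \<in> {..<t}"
        hence "\<omega> \<notin> Y k" using False by auto
        hence "S2.good (lam k \<omega>)" using \<omega> by (simp add: Y_def S2.good_def)
        thus "S2.Wt (snd (S.Psi k (\<lambda>i. \<xi> i \<omega>))) (\<xi> k \<omega>) = inner (lam k \<omega>) (G z (\<xi> k \<omega>))"
          by (simp add: lamPsi[OF \<omega>, symmetric] S2.Wt_def)
      qed
      finally have "\<gamma> \<le> S2.Sk t (Xi_t \<omega>)" using Z by simp
      moreover have "Xi_t \<omega> \<in> space ?P" using measurable_space[OF Xm \<omega>] spP by simp
      ultimately show ?thesis using \<omega> by (auto simp: B'_def B_def)
    qed
  qed
  have "measure M {\<omega> \<in> space M. (\<Sum>k<t. inner (lam k \<omega>) (G z (\<xi> k \<omega>))) \<ge> \<gamma>}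
      \<le> measure M (B' \<union> (\<Union>j\<in>{..<t}. Y j))"
    by (rule M.finite_measure_mono[OF incl]) (use B'sets Ysets in auto)
  also have "\<dots> \<le> measure M B' + measure M (\<Union>j\<in>{..<t}. Y j)"
    by (rule measure_Un_le) (use B'sets Ysets in auto)
  also have "measure M (\<Union>j\<in>{..<t}. Y j) \<le> (\<Sum>j<t. measure M (Y j))"
    by (rule M.finite_measure_subadditive_finite) (use Ysets in auto)
  finally show "measure M {\<omega> \<in> space M. (\<Sum>k<t. inner (lam k \<omega>) (G z (\<xi> k \<omega>))) \<ge> \<gamma>}
           \<le> exp (- (\<gamma>\<^sup>2) / (2 * real t * c\<^sup>2))
             + (\<Sum>j<t. measure M {\<omega> \<in> space M. norm (lam j \<omega>) - c / nu_g > 0})"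
    using mB' unfolding Y_def by linarith
qed

end
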